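(* Let $k\ge 2$ and $\ell\ge 3$ be integers, and let $\Theta(k,\ell)$ be the graph consisting of two vertices $A$ and $B$ joined by $k$ internally vertex-disjoint paths, each of length $\ell$. Then $\mathrm{gp}(\Theta(k,\ell)) = k+1$.
   Context: All graphs are finite, simple and connected. A geodesic is a shortest path between its end-vertices. A set $S$ of vertices of a graph $G$ is a general position set if no three vertices of $S$ lie on a common geodesic of $G$ (i.e., there are no distinct $x,y,z\in S$ with $d_G(x,z)=d_G(x,y)+d_G(y,z)$). The general position number $\mathrm{gp}(G)$ is the maximum cardinality of a general position set of $G$. *)

theory Defs
  imports Main
begin

definition is_walk :: "('a \<Rightarrow> 'a \<Rightarrow> bool) \<Rightarrow> 'a set \<Rightarrow> 'a list \<Rightarrow> bool" where
  "is_walk E V xs \<longleftrightarrow> xs \<noteq> [] \<and> set xs \<subseteq> V \<and>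
     (\<forall>i. Suc i < length xs \<longrightarrow> E (xs ! i) (xs ! Suc i))"

definition gdist :: "('a \<Rightarrow> 'a \<Rightarrow> bool) \<Rightarrow> 'a set \<Rightarrow> 'a \<Rightarrow> 'a \<Rightarrow> nat" where
  "gdist E V x y = (LEAST n. \<exists>xs. is_walk E V xs \<and> hd xs = x \<and> last xs = y \<and> length xs = Suc n)"

definition gp_set :: "('a \<Rightarrow> 'a \<Rightarrow> bool) \<Rightarrow> 'a set \<Rightarrow> 'a set \<Rightarrow> bool" where
  "gp_set E V S \<longleftrightarrow> S \<subseteq> V \<and>
     (\<forall>x\<in>S. \<forall>y\<in>S. \<forall>z\<in>S. x \<noteq> y \<and> y \<noteq> z \<and> x \<noteq> z \<longrightarrow>
        gdist E V x z \<noteq> gdist E V x y + gdist E V y z)"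

definition gp_number :: "('a \<Rightarrow> 'a \<Rightarrow> bool) \<Rightarrow> 'a set \<Rightarrow> nat" where
  "gp_number E V = Max (card ` {S. gp_set E V S})"

text \<open>Vertices A, B and internal vertices Inner i j (path i < k, position 1 \<le> j \<le> l-1).
  Path i is A, Inner i 1, ..., Inner i (l-1), B.\<close>
datatype theta_vertex = TA | TB | Inner nat nat

definition theta_V :: "nat \<Rightarrow> nat \<Rightarrow> theta_vertex set" where
  "theta_V k l = {TA, TB} \<union> {Inner i j | i j. i < k \<and> 1 \<le> j \<and> j \<le> l - 1}"

definition theta_adj0 :: "nat \<Rightarrow> nat \<Rightarrow> theta_vertex \<Rightarrow> theta_vertex \<Rightarrow> bool" where
  "theta_adj0 k l u v \<longleftrightarrow> (\<exists>i<k.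
      (u = TA \<and> v = Inner i 1) \<or>
      (\<exists>j. 1 \<le> j \<and> j + 1 \<le> l - 1 \<and> u = Inner i j \<and> v = Inner i (j + 1)) \<or>
      (u = Inner i (l - 1) \<and> v = TB))"

definition theta_adj :: "nat \<Rightarrow> nat \<Rightarrow> theta_vertex \<Rightarrow> theta_vertex \<Rightarrow> bool" where
  "theta_adj k l u v \<longleftrightarrow> theta_adj0 k l u v \<or> theta_adj0 k l v u"

end

theory Submission imports Defs begin

lemma walk_butlast:
  assumes "is_walk E V (xs @ [x])" "xs \<noteq> []"
  shows "is_walk E V xs \<and> E (last xs) x"
proof -
  have a: "\<And>i. Suc i < length xs \<Longrightarrow> E (xs ! i) (xs ! Suc i)"
  proof -
    fix i assume "Suc i < length xs"
    with assms(1) have "E ((xs@[x]) ! i) ((xs@[x]) ! Suc i)" unfolding is_walk_def by auto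
    with \<open>Suc i < length xs\<close> show "E (xs ! i) (xs ! Suc i)" by (simp add: nth_append)
  qed
  have "E ((xs@[x]) ! (length xs - 1)) ((xs@[x]) ! Suc (length xs - 1))"
    using assms unfolding is_walk_def by (metis Suc_pred' length_append_singleton length_greater_0_conv lessI)
  hence "E (last xs) x" using assms(2) by (simp add: nth_append last_conv_nth)
  thus ?thesis using a assms unfolding is_walk_def by auto
qed

lemma walk_snoc:
  assumes "is_walk E V xs" "E (last xs) x" "x \<in> V"
  shows "is_walk E V (xs @ [x])"
  unfolding is_walk_def
proof (intro conjI allI impI)
  show "xs @ [x] \<noteq> []" by simp
  show "set (xs @ [x]) \<subseteq> V" using assms unfolding is_walk_def by auto
  fix i assume i: "Suc i < length (xs @ [x])"
  show "E ((xs @ [x]) ! i) ((xs @ [x]) ! Suc i)"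
  proof (cases "Suc i < length xs")
    case True thus ?thesis using assms(1) unfolding is_walk_def by (simp add: nth_append)
  next
    case False
    hence "i = length xs - 1" "xs \<noteq> []" using i by auto
    thus ?thesis using assms(1,2) unfolding is_walk_def by (simp add: nth_append last_conv_nth)
  qed
qed

lemma walk_lower:
  assumes lip: "\<And>u v w. u \<in> V \<Longrightarrow> v \<in> V \<Longrightarrow> w \<in> V \<Longrightarrow> E v w \<Longrightarrow> f u w \<le> f u v + 1"
    and refl: "\<And>u. u \<in> V \<Longrightarrow> f u u = 0"
  shows "is_walk E V xs \<Longrightarrow> f (hd xs) (last xs) + 1 \<le> length xs"
proof (induction xs rule: rev_induct)
  case Nil thus ?case by (simp add: is_walk_def)
next
  case (snoc x xs)
  show ?case
  proof (cases "xs = []")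
    case True thus ?thesis using snoc.prems refl by (simp add: is_walk_def)
  next
    case False
    from walk_butlast[OF snoc.prems False] have w: "is_walk E V xs" "E (last xs) x" by auto
    have "hd xs \<in> V" "last xs \<in> V" "x \<in> V" using w(1) snoc.prems False unfolding is_walk_def by auto
    from lip[OF this w(2)] snoc.IH[OF w(1)] False show ?thesis by simp
  qed
qed

lemma walk_upper:
  assumes refl: "\<And>u. u \<in> V \<Longrightarrow> f u u = 0"
    and desc: "\<And>u v. u \<in> V \<Longrightarrow> v \<in> V \<Longrightarrow> u \<noteq> v \<Longrightarrow> \<exists>w\<in>V. E w v \<and> f u w + 1 = f u v"
    and u: "u \<in> V"
  shows "v \<in> V \<Longrightarrow> f u v = n \<Longrightarrow> \<exists>xs. is_walk E V xs \<and> hd xs = u \<and> last xs = v \<and> length xs = Suc n"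
proof (induction n arbitrary: v)
  case 0
  have "u = v" using desc[OF u 0(1)] 0(2) by fastforce
  thus ?case using u by (intro exI[of _ "[u]"]) (simp add: is_walk_def)
next
  case (Suc n)
  have "u \<noteq> v" using refl[OF u] Suc.prems by auto
  then obtain w where w: "w \<in> V" "E w v" "f u w + 1 = f u v" using desc[OF u Suc.prems(1)] by blast
  then obtain xs where xs: "is_walk E V xs" "hd xs = u" "last xs = w" "length xs = Suc n"
    using Suc.IH[of w] Suc.prems by auto
  have "xs \<noteq> []" using xs(1) by (simp add: is_walk_def)
  thus ?case using walk_snoc[OF xs(1) _ Suc.prems(1), of ] xs w
    by (intro exI[of _ "xs @ [v]"]) auto
qed

lemma gdist_eqI:
  assumes lip: "\<And>u v w. u \<in> V \<Longrightarrow> v \<in> V \<Longrightarrow> w \<in> V \<Longrightarrow> E v w \<Longrightarrow> f u w \<le> f u v + 1"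
    and refl: "\<And>u. u \<in> V \<Longrightarrow> f u u = 0"
    and desc: "\<And>u v. u \<in> V \<Longrightarrow> v \<in> V \<Longrightarrow> u \<noteq> v \<Longrightarrow> \<exists>w\<in>V. E w v \<and> f u w + 1 = f u v"
    and u: "u \<in> V" and v: "v \<in> V"
  shows "gdist E V u v = f u v"
  unfolding gdist_def
proof (rule Least_equality)
  show "\<exists>xs. is_walk E V xs \<and> hd xs = u \<and> last xs = v \<and> length xs = Suc (f u v)"
    using walk_upper[OF refl desc u v] by blast
next
  fix n assume "\<exists>xs. is_walk E V xs \<and> hd xs = u \<and> last xs = v \<and> length xs = Suc n"
  then obtain xs where "is_walk E V xs" "hd xs = u" "last xs = v" "length xs = Suc n" by blast
  moreover have "f (hd xs) (last xs) + 1 \<le> length xs"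
    by (rule walk_lower[where V=V and E=E]) (use lip refl \<open>is_walk E V xs\<close> in auto)
  ultimately show "f u v \<le> n" by simp
qed


fun tpos :: "nat \<Rightarrow> theta_vertex \<Rightarrow> nat" where
  "tpos l TA = 0" | "tpos l TB = l" | "tpos l (Inner i j) = j"

fun samep :: "theta_vertex \<Rightarrow> theta_vertex \<Rightarrow> bool" where
  "samep (Inner i j) (Inner i' j') = (i = i')" | "samep _ _ = True"

definition tdist :: "nat \<Rightarrow> theta_vertex \<Rightarrow> theta_vertex \<Rightarrow> nat" where
  "tdist l u v = (if samep u v then (tpos l u - tpos l v) + (tpos l v - tpos l u)
     else min (tpos l u + tpos l v) (2*l - tpos l u - tpos l v))"

lemma inV: "v \<in> theta_V k l \<longleftrightarrow> v = TA \<or> v = TB \<or> (\<exists>i j. v = Inner i j \<and> i < k \<and> 1 \<le> j \<and> j \<le> l - 1)"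
  unfolding theta_V_def by auto

lemma inner_inV[simp]: "Inner i j \<in> theta_V k l \<longleftrightarrow> i < k \<and> 1 \<le> j \<and> j \<le> l - 1"
  unfolding theta_V_def by auto

lemma TA_inV[simp]: "TA \<in> theta_V k l" and TB_inV[simp]: "TB \<in> theta_V k l"
  unfolding theta_V_def by auto

lemma tdist_refl: "tdist l u u = 0"
  by (cases u) (auto simp: tdist_def)

lemma lip0:
  assumes "l \<ge> 3" "u \<in> theta_V k l" "v \<in> theta_V k l" "w \<in> theta_V k l" "theta_adj0 k l v w"
  shows "tdist l u w \<le> tdist l u v + 1 \<and> tdist l u v \<le> tdist l u w + 1"
  using assms unfolding theta_adj0_def inV
  by (auto simp: tdist_def split: if_splits)

lemma lip:
  assumes "l \<ge> 3" "u \<in> theta_V k l" "v \<in> theta_V k l" "w \<in> theta_V k l" "theta_adj k l v w"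
  shows "tdist l u w \<le> tdist l u v + 1"
  using assms(5) lip0[OF assms(1-4)] lip0[OF assms(1,2,4,3)] unfolding theta_adj_def by auto

lemma desc_TA:
  assumes "l \<ge> 3" "k \<ge> 2" "u \<in> theta_V k l" "u \<noteq> TA"
  shows "\<exists>w\<in>theta_V k l. theta_adj k l w TA \<and> tdist l u w + 1 = tdist l u TA"
proof (cases u)
  case TB thus ?thesis using assms
    by (intro bexI[of _ "Inner 0 1"]) (auto simp: tdist_def theta_adj_def theta_adj0_def)
next
  case (Inner i j) thus ?thesis using assms
    by (intro bexI[of _ "Inner i 1"]) (auto simp: tdist_def theta_adj_def theta_adj0_def)
qed (use assms in auto)

lemma desc_TB:
  assumes "l \<ge> 3" "k \<ge> 2" "u \<in> theta_V k l" "u \<noteq> TB"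
  shows "\<exists>w\<in>theta_V k l. theta_adj k l w TB \<and> tdist l u w + 1 = tdist l u TB"
proof (cases u)
  case TA thus ?thesis using assms
    by (intro bexI[of _ "Inner 0 (l-1)"]) (auto simp: tdist_def theta_adj_def theta_adj0_def)
next
  case (Inner i j) thus ?thesis using assms
    by (intro bexI[of _ "Inner i (l-1)"]) (auto simp: tdist_def theta_adj_def theta_adj0_def)
qed (use assms in auto)

definition pv :: "nat \<Rightarrow> nat \<Rightarrow> theta_vertex" where
  "pv i j = (if j = 1 then TA else Inner i (j - 1))"
definition nv :: "nat \<Rightarrow> nat \<Rightarrow> nat \<Rightarrow> theta_vertex" where
  "nv l i j = (if j = l - 1 then TB else Inner i (j + 1))"

lemma pv_props:
  assumes "l \<ge> 3" "i < k" "1 \<le> j" "j \<le> l - 1"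
  shows "pv i j \<in> theta_V k l" "theta_adj k l (pv i j) (Inner i j)"
  using assms by (auto simp: pv_def theta_adj_def theta_adj0_def)

lemma nv_props:
  assumes "l \<ge> 3" "i < k" "1 \<le> j" "j \<le> l - 1"
  shows "nv l i j \<in> theta_V k l" "theta_adj k l (nv l i j) (Inner i j)"
  using assms by (auto simp: nv_def theta_adj_def theta_adj0_def)

lemma desc_Inner:
  assumes "l \<ge> 3" "k \<ge> 2" "u \<in> theta_V k l" "u \<noteq> Inner i j" "i < k" "1 \<le> j" "j \<le> l - 1"
  shows "\<exists>w\<in>theta_V k l. theta_adj k l w (Inner i j) \<and> tdist l u w + 1 = tdist l u (Inner i j)"
proof (cases "u = TA \<or> (\<exists>j'. u = Inner i j' \<and> j' < j) \<or> (\<exists>i' j'. u = Inner i' j' \<and> i' \<noteq> i \<and> j + j' \<le> l)")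
  case True
  have "tdist l u (pv i j) + 1 = tdist l u (Inner i j)"
    using True assms by (auto simp: pv_def tdist_def)
  thus ?thesis using pv_props[OF assms(1,5-7)] by blast
next
  case False
  have "tdist l u (nv l i j) + 1 = tdist l u (Inner i j)"
    using False assms unfolding inV by (auto simp: nv_def tdist_def)
  thus ?thesis using nv_props[OF assms(1,5-7)] by blast
qed

lemma desc:
  assumes "l \<ge> 3" "k \<ge> 2" "u \<in> theta_V k l" "v \<in> theta_V k l" "u \<noteq> v"
  shows "\<exists>w\<in>theta_V k l. theta_adj k l w v \<and> tdist l u w + 1 = tdist l u v"
  using assms desc_TA desc_TB desc_Inner unfolding inV[of v] by blast

lemma gdist_theta:
  assumes "l \<ge> 3" "k \<ge> 2" "u \<in> theta_V k l" "v \<in> theta_V k l"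
  shows "gdist (theta_adj k l) (theta_V k l) u v = tdist l u v"
  by (rule gdist_eqI[where f="tdist l"]) (use assms lip desc tdist_refl in auto)


lemma gp_tdist:
  assumes "l \<ge> 3" "k \<ge> 2" "gp_set (theta_adj k l) (theta_V k l) S"
    "x \<in> S" "y \<in> S" "z \<in> S" "x \<noteq> y" "y \<noteq> z" "x \<noteq> z"
  shows "tdist l x z \<noteq> tdist l x y + tdist l y z"
proof -
  have "S \<subseteq> theta_V k l" using assms(3) unfolding gp_set_def by auto
  with assms show ?thesis unfolding gp_set_def using gdist_theta[OF assms(1,2)] by (metis subsetD)
qed

context
  fixes k l S
  assumes l3: "l \<ge> 3" and k2: "k \<ge> 2" and gp: "gp_set (theta_adj k l) (theta_V k l) S"
begin

lemma SV: "S \<subseteq> theta_V k l" using gp unfolding gp_set_def by auto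

lemmas bad = gp_tdist[OF l3 k2 gp]

lemma innerS: "Inner i j \<in> S \<Longrightarrow> i < k \<and> 1 \<le> j \<and> j \<le> l - 1"
  using SV by auto

lemma F1: "TA \<in> S \<Longrightarrow> TB \<in> S \<Longrightarrow> S \<subseteq> {TA, TB}"
proof
  fix w assume a: "TA \<in> S" "TB \<in> S" "w \<in> S"
  show "w \<in> {TA, TB}"
  proof (rule ccontr)
    assume "w \<notin> {TA, TB}"
    then obtain i j where w: "w = Inner i j" by (cases w) auto
    have "tdist l TA TB \<noteq> tdist l TA w + tdist l w TB" using bad[OF a(1) a(3) a(2)] w by auto
    thus False using innerS[of i j] a w by (auto simp: tdist_def)
  qed
qed

lemma F2A: "TA \<in> S \<Longrightarrow> Inner i a \<in> S \<Longrightarrow> Inner i b \<in> S \<Longrightarrow> a = b"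
proof (rule ccontr)
  assume a: "TA \<in> S" "Inner i a \<in> S" "Inner i b \<in> S" "a \<noteq> b"
  show False
  proof (cases "a < b")
    case True
    from bad[OF a(1,2,3)] a True innerS[OF a(2)] innerS[OF a(3)] show False by (auto simp: tdist_def)
  next
    case False
    from bad[OF a(1,3,2)] a False innerS[OF a(2)] innerS[OF a(3)] show False by (auto simp: tdist_def)
  qed
qed

lemma F2B: "TB \<in> S \<Longrightarrow> Inner i a \<in> S \<Longrightarrow> Inner i b \<in> S \<Longrightarrow> a = b"
proof (rule ccontr)
  assume a: "TB \<in> S" "Inner i a \<in> S" "Inner i b \<in> S" "a \<noteq> b"
  show False
  proof (cases "a < b")
    case True
    from bad[OF a(1,3,2)] a True innerS[OF a(2)] innerS[OF a(3)] show False by (auto simp: tdist_def)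
  next
    case False
    from bad[OF a(1,2,3)] a False innerS[OF a(2)] innerS[OF a(3)] show False by (auto simp: tdist_def)
  qed
qed

lemma F3: "Inner i a \<in> S \<Longrightarrow> Inner i b \<in> S \<Longrightarrow> Inner i c \<in> S \<Longrightarrow> a < b \<Longrightarrow> b < c \<Longrightarrow> False"
  using bad[of "Inner i a" "Inner i b" "Inner i c"] by (auto simp: tdist_def)

lemma F4: "Inner i a \<in> S \<Longrightarrow> Inner i b \<in> S \<Longrightarrow> Inner i' c \<in> S \<Longrightarrow> Inner i' d \<in> S
   \<Longrightarrow> i \<noteq> i' \<Longrightarrow> a < b \<Longrightarrow> c < d \<Longrightarrow> False"
proof -
  assume a: "Inner i a \<in> S" "Inner i b \<in> S" "Inner i' c \<in> S" "Inner i' d \<in> S" "i \<noteq> i'" "a < b" "c < d"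
  note r = innerS[OF a(1)] innerS[OF a(2)] innerS[OF a(3)] innerS[OF a(4)]
  have "a + c < l"
    using bad[OF a(1,2,3)] a r by (auto simp: tdist_def)
  moreover have "b + c > l"
    using bad[OF a(2,1,3)] a r by (auto simp: tdist_def)
  moreover have "a + d < l"
    using bad[OF a(1,2,4)] a r by (auto simp: tdist_def)
  moreover have "a + d > l"
    using bad[OF a(4,3,1)] a r by (auto simp: tdist_def)
  ultimately show False by simp
qed

definition gmap :: "theta_vertex \<Rightarrow> nat" where
  "gmap v = (case v of Inner i j \<Rightarrow> if (\<exists>j'<j. Inner i j' \<in> S) then k else i | _ \<Rightarrow> k)"

lemma gmap_inj:
  assumes nAB: "\<not> (TA \<in> S \<and> TB \<in> S)"
  shows "inj_on gmap S"
proof (rule inj_onI)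
  fix v w assume v: "v \<in> S" and w: "w \<in> S" and g: "gmap v = gmap w"
  show "v = w"
  proof (cases v)
    case TA
    show ?thesis
    proof (cases w)
      case TB thus ?thesis using TA v w nAB by auto
    next
      case (Inner i j)
      then obtain j' where "j' < j" "Inner i j' \<in> S" using g TA innerS[of i j] w
        by (auto simp: gmap_def split: if_splits)
      thus ?thesis using F2A[of i j j'] TA v w Inner by auto
    qed (use TA in simp)
  next
    case TB
    show ?thesis
    proof (cases w)
      case TA thus ?thesis using TB v w nAB by auto
    next
      case (Inner i j)
      then obtain j' where "j' < j" "Inner i j' \<in> S" using g TB innerS[of i j] w
        by (auto simp: gmap_def split: if_splits)
      thus ?thesis using F2B[of i j j'] TB v w Inner by auto
    qed (use TB in simp)
  next
    case (Inner i j)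
    note vi = Inner
    show ?thesis
    proof (cases w)
      case TA
      then obtain j' where "j' < j" "Inner i j' \<in> S" using g vi innerS[of i j] v
        by (auto simp: gmap_def split: if_splits)
      thus ?thesis using F2A[of i j j'] TA v w vi by auto
    next
      case TB
      then obtain j' where "j' < j" "Inner i j' \<in> S" using g vi innerS[of i j] v
        by (auto simp: gmap_def split: if_splits)
      thus ?thesis using F2B[of i j j'] TB v w vi by auto
    next
      case (Inner i' j')
      note wi = Inner
      show ?thesis
      proof (cases "\<exists>a<j. Inner i a \<in> S")
        case True
        then obtain a where a: "a < j" "Inner i a \<in> S" by blast
        have gk: "gmap v = k" using True vi by (simp add: gmap_def)
        hence "\<exists>c<j'. Inner i' c \<in> S" using g wi innerS[of i' j'] w by (auto simp: gmap_def split: if_splits)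
        then obtain c where c: "c < j'" "Inner i' c \<in> S" by blast
        have "i = i'" using F4[OF a(2) v[unfolded vi] c(2) w[unfolded wi]] a c by blast
        moreover have "j = j'"
        proof (rule ccontr)
          assume "j \<noteq> j'"
          hence "j < j' \<or> j' < j" by auto
          thus False using F3 a c v w vi wi \<open>i = i'\<close> by blast
        qed
        ultimately show ?thesis using vi wi by simp
      next
        case False
        have gi: "gmap v = i" using False vi by (auto simp: gmap_def)
        have ik: "i < k" using innerS v vi by blast
        have "\<not> (\<exists>c<j'. Inner i' c \<in> S)"
          using g gi ik wi by (auto simp: gmap_def split: if_splits)
        hence "gmap w = i'" using wi by (auto simp: gmap_def)
        hence "i = i'" using g gi by simp
        moreover have "j = j'"
          using False \<open>\<not> (\<exists>c<j'. Inner i' c \<in> S)\<close> v w vi wi \<open>i = i'\<close>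
          by (metis linorder_neqE_nat)
        ultimately show ?thesis using vi wi by simp
      qed
    qed
  qed
qed

lemma gmap_range: "gmap ` S \<subseteq> {..k}"
proof
  fix x assume "x \<in> gmap ` S"
  then obtain v where v: "v \<in> S" "x = gmap v" by blast
  show "x \<in> {..k}"
  proof (cases v)
    case (Inner i j) thus ?thesis using innerS[of i j] v by (auto simp: gmap_def)
  qed (use v in \<open>auto simp: gmap_def\<close>)
qed

lemma card_le: "card S \<le> k + 1"
proof (cases "TA \<in> S \<and> TB \<in> S")
  case True
  hence "card S \<le> card {TA, TB}" using F1 by (intro card_mono) auto
  also have "\<dots> \<le> 2" by (simp add: card_insert_if)
  finally show ?thesis using k2 by simp
next
  case False
  have "card S \<le> card {..k}"
    using card_inj_on_le[OF gmap_inj[OF False] gmap_range] by simp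
  thus ?thesis by simp
qed

end

lemma finite_V: "finite (theta_V k l)"
proof -
  have "theta_V k l \<subseteq> {TA, TB} \<union> (\<lambda>(i,j). Inner i j) ` ({..<k} \<times> {..<l})"
    unfolding theta_V_def by auto
  thus ?thesis by (rule finite_subset) auto
qed

lemma S0_gp:
  assumes "l \<ge> 3" "k \<ge> 2"
  shows "gp_set (theta_adj k l) (theta_V k l) (insert TA ((\<lambda>i. Inner i (l - 1)) ` {..<k}))"
  unfolding gp_set_def
proof (intro conjI ballI impI)
  show "insert TA ((\<lambda>i. Inner i (l - 1)) ` {..<k}) \<subseteq> theta_V k l" using assms by auto
  fix x y z assume xyz: "x \<in> insert TA ((\<lambda>i. Inner i (l - 1)) ` {..<k})"
    "y \<in> insert TA ((\<lambda>i. Inner i (l - 1)) ` {..<k})" "z \<in> insert TA ((\<lambda>i. Inner i (l - 1)) ` {..<k})"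
    and d: "x \<noteq> y \<and> y \<noteq> z \<and> x \<noteq> z"
  have V: "x \<in> theta_V k l" "y \<in> theta_V k l" "z \<in> theta_V k l" using xyz assms by auto
  show "gdist (theta_adj k l) (theta_V k l) x z \<noteq>
        gdist (theta_adj k l) (theta_V k l) x y + gdist (theta_adj k l) (theta_V k l) y z"
    unfolding gdist_theta[OF assms V(1,3)] gdist_theta[OF assms V(1,2)] gdist_theta[OF assms V(2,3)]
    using xyz d assms by (auto simp: tdist_def)
qed

theorem proposition2p1:
  fixes k l :: nat
  assumes "k \<ge> 2" and "l \<ge> 3"
  shows "gp_number (theta_adj k l) (theta_V k l) = k + 1"
  unfolding gp_number_def
proof (rule Max_eqI)
  have "{S. gp_set (theta_adj k l) (theta_V k l) S} \<subseteq> Pow (theta_V k l)"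
    unfolding gp_set_def by auto
  thus "finite (card ` {S. gp_set (theta_adj k l) (theta_V k l) S})"
    using finite_V by (meson finite_Pow_iff finite_imageI finite_subset)
next
  fix y assume "y \<in> card ` {S. gp_set (theta_adj k l) (theta_V k l) S}"
  thus "y \<le> k + 1" using card_le[OF assms(2,1)] by auto
next
  let ?S = "insert TA ((\<lambda>i. Inner i (l - 1)) ` {..<k})"
  have "card ?S = k + 1"
    by (subst card_insert_disjoint) (auto simp: card_image inj_on_def)
  thus "k + 1 \<in> card ` {S. gp_set (theta_adj k l) (theta_V k l) S}"
    using S0_gp[OF assms(2,1)] by (metis (mono_tags) image_eqI mem_Collect_eq)
qed

end
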